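(* Fix $\varepsilon>0$ and $C>0$. There are constants $c_1,c_2>0$ (depending on $\varepsilon$ and $C$) and $n_0$ such that for all $n\ge n_0$ and all integers $2\le k\le Cn^{1/2-\varepsilon}$ there exist a length $m$ and a sequence $S\in[n]^m$ with $\mathit{WS}(S)\le c_1 m\log_2 k$ and ${\mathit LF}^k(S)\ge c_2 m\log_2(n/k)$.
   Context: Working set bound: for $S=(s_1,\dots,s_m)$ and $j\le m$, let $\rho(j)=\max\{i<j:s_i=s_j\}$, with $\rho(j)=0$ if there is no such $i$, and let $w_S(j)=\{s_i:\rho(j)<i\le j\}$. Then $\mathit{WS}(S)=\sum_{j=1}^m\log_2|w_S(j)|$. For a BST $T$, $d_T(a,b)$ is the number of edges on the path between $a$ and $b$. $k$-lazy finger bound: for a BST $T$ on $[n]$, a finger strategy consists of initial positions $\vec\ell\in[n]^k$ and assignments $\vec f\in[k]^m$, where finger $f_t$ serves $s_t$ and then sits at $s_t$. The cost is $\sum_t(1+d_T(s_t,\sigma(f_t,t)))$, where $\sigma(i,t)$ is the position of finger $i$ just before time $t$. ${\mathit LF}^k_T(S)$ is the minimum over strategies, and ${\mathit LF}^k(S)=\min_T{\mathit LF}^k_T(S)$ over BSTs $T$ on $[n]$. *)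

theory Defs
  imports Complex_Main "HOL-Library.Tree"
begin

text \<open>Sequences S = (s_1,...,s_m) are functions s :: nat => nat read on indices 1..m.
  The key set is [n] = {1..n}.\<close>

definition seq_in :: "nat \<Rightarrow> nat \<Rightarrow> (nat \<Rightarrow> nat) \<Rightarrow> bool" where
  "seq_in n m s \<longleftrightarrow> (\<forall>i\<in>{1..m}. s i \<in> {1..n})"

definition prev_occ :: "(nat \<Rightarrow> nat) \<Rightarrow> nat \<Rightarrow> nat" where
  "prev_occ s j = (if \<exists>i\<in>{1..<j}. s i = s j then Max {i\<in>{1..<j}. s i = s j} else 0)"

definition wset :: "(nat \<Rightarrow> nat) \<Rightarrow> nat \<Rightarrow> nat set" where
  "wset s j = {s i | i. prev_occ s j < i \<and> i \<le> j}"

definition WS :: "nat \<Rightarrow> (nat \<Rightarrow> nat) \<Rightarrow> real" where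
  "WS m s = (\<Sum>j=1..m. log 2 (real (card (wset s j))))"

definition bst_on :: "nat \<Rightarrow> nat tree \<Rightarrow> bool" where
  "bst_on n t \<longleftrightarrow> inorder t = [1..<n+1]"

fun tpath :: "nat tree \<Rightarrow> nat \<Rightarrow> nat list" where
  "tpath Leaf x = []"
| "tpath (Node l a r) x =
     (if x = a then [a] else if x < a then a # tpath l x else a # tpath r x)"

fun lcp_len :: "nat list \<Rightarrow> nat list \<Rightarrow> nat" where
  "lcp_len (x # xs) (y # ys) = (if x = y then Suc (lcp_len xs ys) else 0)"
| "lcp_len _ _ = 0"

text \<open>d_T(a,b): number of edges on the tree path between a and b
  (depth a + depth b - 2 depth(lca a b), computed via root paths).\<close>
definition tdist :: "nat tree \<Rightarrow> nat \<Rightarrow> nat \<Rightarrow> nat" where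
  "tdist t a b = length (tpath t a) + length (tpath t b) - 2 * lcp_len (tpath t a) (tpath t b)"

text \<open>Position of finger i just before time t, given initial positions ell and
  assignment f (finger f t serves s t and then sits at s t).\<close>
definition finger_pos :: "(nat \<Rightarrow> nat) \<Rightarrow> (nat \<Rightarrow> nat) \<Rightarrow> (nat \<Rightarrow> nat) \<Rightarrow> nat \<Rightarrow> nat \<Rightarrow> nat" where
  "finger_pos s ell f i t =
     (if \<exists>t'\<in>{1..<t}. f t' = i then s (Max {t'\<in>{1..<t}. f t' = i}) else ell i)"

definition finger_cost :: "nat tree \<Rightarrow> nat \<Rightarrow> (nat \<Rightarrow> nat) \<Rightarrow> (nat \<Rightarrow> nat) \<Rightarrow> (nat \<Rightarrow> nat) \<Rightarrow> nat" where
  "finger_cost t m s ell f = (\<Sum>j=1..m. 1 + tdist t (s j) (finger_pos s ell f (f j) j))"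

definition LF_T :: "nat \<Rightarrow> nat \<Rightarrow> nat tree \<Rightarrow> nat \<Rightarrow> (nat \<Rightarrow> nat) \<Rightarrow> nat" where
  "LF_T n k t m s = Inf {finger_cost t m s ell f | ell f.
      (\<forall>i\<in>{1..k}. ell i \<in> {1..n}) \<and> (\<forall>j\<in>{1..m}. f j \<in> {1..k})}"

definition LF :: "nat \<Rightarrow> nat \<Rightarrow> nat \<Rightarrow> (nat \<Rightarrow> nat) \<Rightarrow> nat" where
  "LF n k m s = Inf {LF_T n k t m s | t. bst_on n t}"

end

theory Submission
  imports Defs "HOL-Real_Asymp.Real_Asymp"
begin


lemma bst_on_bst: "bst_on n t \<Longrightarrow> bst t"
  unfolding bst_on_def bst_iff_sorted_wrt_less by (metis sorted_wrt_upt)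

lemma bst_on_set: "bst_on n t \<Longrightarrow> set_tree t = {1..n}"
  unfolding bst_on_def by (metis atLeastLessThanSuc_atLeastAtMost set_inorder set_upt Suc_eq_plus1)

lemma lcp_len_sym: "lcp_len xs ys = lcp_len ys xs"
  by (induction xs ys rule: lcp_len.induct) auto

lemma tdist_sym: "tdist t a b = tdist t b a"
  unfolding tdist_def by (simp add: lcp_len_sym)

lemma lcp_len_le: "lcp_len xs ys \<le> length xs" "lcp_len xs ys \<le> length ys"
  by (induction xs ys rule: lcp_len.induct) auto

lemma lcp_len_take: "take (lcp_len xs ys) xs = take (lcp_len xs ys) ys"
  by (induction xs ys rule: lcp_len.induct) auto

lemma tpath_nonempty: "x \<in> set_tree t \<Longrightarrow> tpath t x \<noteq> []"
  by (cases t) auto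

lemma tpath_hd: "x \<in> set_tree t \<Longrightarrow> t = Node l a r \<Longrightarrow> hd (tpath t x) = a"
  by auto

lemma card_ins_Un: "finite A \<Longrightarrow> finite B \<Longrightarrow> card (insert a (A \<union> B)) \<le> 1 + (card A + card B)"
proof -
  assume "finite A" "finite B"
  then have "card (insert a (A \<union> B)) \<le> Suc (card (A \<union> B))" by (simp add: card_insert_if)
  also have "card (A \<union> B) \<le> card A + card B" by (rule card_Un_le)
  finally show ?thesis by simp
qed

lemma L1: "bst t \<Longrightarrow> card {y \<in> set_tree t. length (tpath t y) \<le> j} \<le> 2^j - 1"
proof (induction t arbitrary: j)
  case Leaf then show ?case by simp
next
  case (Node l a r)
  show ?case
  proof (cases j)
    case 0
    have "{y \<in> set_tree (Node l a r). length (tpath (Node l a r) y) \<le> j} = {}"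
      using 0 by (auto simp del: tpath.simps) (simp_all split: if_splits)
    then show ?thesis by (metis card.empty zero_le)
  next
    case (Suc i)
    have sub: "{y \<in> set_tree (Node l a r). length (tpath (Node l a r) y) \<le> j} \<subseteq>
       insert a ({y \<in> set_tree l. length (tpath l y) \<le> i} \<union> {y \<in> set_tree r. length (tpath r y) \<le> i})"
    proof
      fix y assume y: "y \<in> {y \<in> set_tree (Node l a r). length (tpath (Node l a r) y) \<le> j}"
      have lt: "\<forall>x\<in>set_tree l. x < a" and gt: "\<forall>x\<in>set_tree r. a < x" using Node.prems by auto
      show "y \<in> insert a ({y \<in> set_tree l. length (tpath l y) \<le> i} \<union> {y \<in> set_tree r. length (tpath r y) \<le> i})"
      proof (cases "y = a")
        case False
        then have "y \<in> set_tree l \<or> y \<in> set_tree r" using y by auto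
        then show ?thesis using y lt gt Suc False by auto
      qed simp
    qed
    have "card {y \<in> set_tree (Node l a r). length (tpath (Node l a r) y) \<le> j} \<le>
       card (insert a ({y \<in> set_tree l. length (tpath l y) \<le> i} \<union> {y \<in> set_tree r. length (tpath r y) \<le> i}))"
      by (rule card_mono[OF _ sub]) simp
    also have "\<dots> \<le> 1 + (card {y \<in> set_tree l. length (tpath l y) \<le> i} + card {y \<in> set_tree r. length (tpath r y) \<le> i})"
      by (rule card_ins_Un) simp_all
    also have "\<dots> \<le> 1 + ((2^i - 1) + (2^i - 1))" using Node.prems add_le_mono[OF Node.IH(1)[of i] Node.IH(2)[of i]] by simp
    also have "\<dots> \<le> 2^j - 1" using Suc by (cases "(2::nat)^i") simp_all
    finally show ?thesis .
  qed
qed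

lemma tpath_hd_in: "y \<in> set_tree t \<Longrightarrow> hd (tpath t y) \<in> set_tree t"
  by (cases t) auto

lemma L2: "bst t \<Longrightarrow> p \<noteq> [] \<Longrightarrow> card {y \<in> set_tree t. \<exists>q. tpath t y = p @ q \<and> length q \<le> j} \<le> 2^(j+1) - 1"
proof (induction t arbitrary: p)
  case Leaf then show ?case by simp
next
  case (Node l a r)
  obtain b p' where p: "p = b # p'" using Node.prems by (cases p) auto
  have lt: "\<forall>x\<in>set_tree l. x < a" and gt: "\<forall>x\<in>set_tree r. a < x" and bl: "bst l" and br: "bst r"
    using Node.prems by auto
  let ?S = "{y \<in> set_tree (Node l a r). \<exists>q. tpath (Node l a r) y = p @ q \<and> length q \<le> j}"
  show ?case
  proof (cases "b = a")
    case False
    have "?S = {}" using False p by (auto split: if_splits)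
    then show ?thesis by (metis card.empty zero_le)
  next
    case True
    show ?thesis
    proof (cases "p' = []")
      case True
      have "?S \<subseteq> {y \<in> set_tree (Node l a r). length (tpath (Node l a r) y) \<le> j+1}"
        using p True by auto
      then have "card ?S \<le> card {y \<in> set_tree (Node l a r). length (tpath (Node l a r) y) \<le> j+1}"
        by (intro card_mono) simp_all
      also have "\<dots> \<le> 2^(j+1) - 1" by (rule L1[OF Node.prems(1)])
      finally show ?thesis .
    next
      case False
      let ?Sl = "{y \<in> set_tree l. \<exists>q. tpath l y = p' @ q \<and> length q \<le> j}"
      let ?Sr = "{y \<in> set_tree r. \<exists>q. tpath r y = p' @ q \<and> length q \<le> j}"
      have sub: "?S \<subseteq> ?Sl \<union> ?Sr"
      proof
        fix y assume y: "y \<in> ?S"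
        then obtain q where q: "tpath (Node l a r) y = p @ q" "length q \<le> j" by auto
        have "y \<noteq> a" using q p False by auto
        then have "y \<in> set_tree l \<or> y \<in> set_tree r" using y by auto
        then show "y \<in> ?Sl \<union> ?Sr"
        proof
          assume yl: "y \<in> set_tree l"
          then have "y < a" using lt by auto
          then show ?thesis using q p yl by auto
        next
          assume yr: "y \<in> set_tree r"
          then have "a < y" using gt by auto
          then show ?thesis using q p yr by auto
        qed
      qed
      have one: "?Sl = {} \<or> ?Sr = {}"
      proof (rule ccontr)
        assume "\<not> (?Sl = {} \<or> ?Sr = {})"
        then obtain y1 y2 q1 q2 where y1: "y1 \<in> set_tree l" "tpath l y1 = p' @ q1"
          and y2: "y2 \<in> set_tree r" "tpath r y2 = p' @ q2" by blast
        have "hd (tpath l y1) = hd p'" "hd (tpath r y2) = hd p'" using y1 y2 False by auto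
        moreover have "hd (tpath l y1) \<in> set_tree l" "hd (tpath r y2) \<in> set_tree r"
          using tpath_hd_in[OF y1(1)] tpath_hd_in[OF y2(1)] by auto
        ultimately show False using lt gt by (metis less_asym)
      qed
      have "card ?S \<le> card (?Sl \<union> ?Sr)" by (intro card_mono[OF _ sub]) simp
      also have "\<dots> \<le> 2^(j+1) - 1"
      proof -
        have "card (?Sl \<union> ?Sr) = card ?Sl \<or> card (?Sl \<union> ?Sr) = card ?Sr"
        proof (cases "?Sl = {}")
          case True then show ?thesis by (simp only: Un_empty_left) simp
        next
          case False then have "?Sr = {}" using one by blast
          then show ?thesis by (simp only: Un_empty_right) simp
        qed
        then show ?thesis using Node.IH(1)[OF bl False] Node.IH(2)[OF br False] by linarith
      qed
      finally show ?thesis .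
    qed
  qed
qed

lemma ball_bound:
  assumes "bst t"
  shows "card {y \<in> set_tree t. tdist t x y \<le> d} \<le> (d+1) * 2^(d+1)"
proof -
  define px where "px = tpath t x"
  define S where "S p = {y \<in> set_tree t. \<exists>q. tpath t y = p @ q \<and> length q \<le> d}" for p
  have cS: "card (S p) \<le> 2^(d+1)" for p
  proof (cases "p = []")
    case True
    have "S p = {y \<in> set_tree t. length (tpath t y) \<le> d}" using True unfolding S_def by auto
    then have "card (S p) \<le> 2^d - 1" using L1[OF assms] by simp
    also have "\<dots> \<le> 2^(d+1)" by simp
    finally show ?thesis .
  next
    case False
    show ?thesis using L2[OF assms False, of d] unfolding S_def by simp
  qed
  have sub: "{y \<in> set_tree t. tdist t x y \<le> d} \<subseteq> (\<Union>l\<in>{length px - d..length px}. S (take l px))"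
  proof
    fix y assume y: "y \<in> {y \<in> set_tree t. tdist t x y \<le> d}"
    define py where "py = tpath t y"
    define l where "l = lcp_len px py"
    have l1: "l \<le> length px" "l \<le> length py" unfolding l_def by (rule lcp_len_le)+
    have tk: "take l px = take l py" unfolding l_def by (rule lcp_len_take)
    have td: "length px + length py - 2 * l \<le> d" using y unfolding tdist_def px_def py_def l_def by simp
    have "py = take l px @ drop l py" using tk by simp
    moreover have "length (drop l py) \<le> d" using td l1 by simp
    ultimately have "y \<in> S (take l px)" using y unfolding S_def py_def by blast
    moreover have "l \<in> {length px - d..length px}" using td l1 by auto
    ultimately show "y \<in> (\<Union>l\<in>{length px - d..length px}. S (take l px))" by blast
  qed
  have "card {y \<in> set_tree t. tdist t x y \<le> d} \<le> card (\<Union>l\<in>{length px - d..length px}. S (take l px))"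
    by (intro card_mono[OF _ sub]) (simp add: S_def)
  also have "\<dots> \<le> (\<Sum>l\<in>{length px - d..length px}. card (S (take l px)))" by (rule card_UN_le) simp
  also have "\<dots> \<le> (\<Sum>l\<in>{length px - d..length px}. 2^(d+1))" by (intro sum_mono cS)
  also have "\<dots> = card {length px - d..length px} * 2^(d+1)" by simp
  also have "\<dots> \<le> (d+1) * 2^(d+1)" by (intro mult_le_mono1) simp
  finally show ?thesis .
qed




definition gd :: "nat \<Rightarrow> nat tree \<Rightarrow> nat list \<Rightarrow> bool" where
  "gd D t u \<longleftrightarrow> (\<forall>p<length u. \<forall>q<length u. p \<noteq> q \<longrightarrow> D < tdist t (u!p) (u!q))"

lemma bad_count:
  fixes A :: "nat set"
  assumes fin: "finite A" and ball: "\<And>y. y \<in> A \<Longrightarrow> card {x\<in>A. tdist t x y \<le> D} \<le> B"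
  shows "card {u. (set u \<subseteq> A \<and> length u = K) \<and> \<not> gd D t u} * card A \<le> K^2 * B * card A ^ K"
proof (induction K)
  case 0
  have "{u. (set u \<subseteq> A \<and> length u = 0) \<and> \<not> gd D t u} = {}" by (auto simp: gd_def)
  then show ?case by simp
next
  case (Suc K)
  let ?L = "{u. set u \<subseteq> A \<and> length u = K}"
  let ?bad = "\<lambda>K. {u. (set u \<subseteq> A \<and> length u = K) \<and> \<not> gd D t u}"
  let ?X = "(\<lambda>(x,u). x # u) ` (A \<times> ?bad K)"
  let ?Y = "\<Union>u\<in>?L. (\<lambda>x. x # u) ` (\<Union>j\<in>{..<K}. {x\<in>A. tdist t x (u!j) \<le> D})"
  have finL: "finite ?L" using fin by (simp add: finite_lists_length_eq)
  have sub: "?bad (Suc K) \<subseteq> ?X \<union> ?Y"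
  proof
    fix v assume v: "v \<in> ?bad (Suc K)"
    then obtain x u where xu: "v = x # u" by (cases v) auto
    have uL: "u \<in> ?L" and xA: "x \<in> A" using v xu by auto
    show "v \<in> ?X \<union> ?Y"
    proof (cases "gd D t u")
      case False
      then have "(x,u) \<in> A \<times> ?bad K" using uL xA by auto
      then show ?thesis using xu by blast
    next
      case True
      from v obtain p q where pq: "p < Suc K" "q < Suc K" "p \<noteq> q" "tdist t (v!p) (v!q) \<le> D"
        by (auto simp: gd_def not_less)
      have "\<exists>j<K. tdist t x (u!j) \<le> D"
      proof (cases "p = 0")
        case True
        then have "q = Suc (q - 1)" using pq by simp
        then show ?thesis using pq True xu by (metis Suc_less_SucD nth_Cons_0 nth_Cons_Suc)
      next
        case False
        have pp: "p = Suc (p - 1)" using False by simp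
        show ?thesis
        proof (cases "q = 0")
          case True
          then show ?thesis using pq pp xu tdist_sym by (metis Suc_less_SucD nth_Cons_0 nth_Cons_Suc)
        next
          case False
          have qq: "q = Suc (q - 1)" using False by simp
          have "tdist t (u!(p-1)) (u!(q-1)) \<le> D" using pq pp qq xu by (metis nth_Cons_Suc)
          moreover have "p - 1 < length u" "q - 1 < length u" "p - 1 \<noteq> q - 1" using pq pp qq uL by auto
          ultimately show ?thesis using True unfolding gd_def by (meson not_less)
        qed
      qed
      then obtain j where "j < K" "tdist t x (u!j) \<le> D" by blast
      then show ?thesis using xu uL xA by blast
    qed
  qed
  have fb: "finite (?bad K)" by (rule finite_subset[OF _ finL]) auto
  have cX: "card ?X \<le> card A * card (?bad K)"
  proof -
    have "card ?X \<le> card (A \<times> ?bad K)" by (intro card_image_le finite_cartesian_product fin fb)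
    also have "\<dots> = card A * card (?bad K)" by (rule card_cartesian_product)
    finally show ?thesis .
  qed
  have cY: "card ?Y \<le> card A ^ K * (K * B)"
  proof -
    have "card ?Y \<le> (\<Sum>u\<in>?L. card ((\<lambda>x. x # u) ` (\<Union>j\<in>{..<K}. {x\<in>A. tdist t x (u!j) \<le> D})))"
      by (rule card_UN_le[OF finL])
    also have "\<dots> \<le> (\<Sum>u\<in>?L. K * B)"
    proof (rule sum_mono)
      fix u assume u: "u \<in> ?L"
      have "card ((\<lambda>x. x # u) ` (\<Union>j\<in>{..<K}. {x\<in>A. tdist t x (u!j) \<le> D})) \<le> card (\<Union>j\<in>{..<K}. {x\<in>A. tdist t x (u!j) \<le> D})"
        by (rule card_image_le) (simp add: fin)
      also have "\<dots> \<le> (\<Sum>j\<in>{..<K}. card {x\<in>A. tdist t x (u!j) \<le> D})" by (rule card_UN_le) simp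
      also have "\<dots> \<le> (\<Sum>j\<in>{..<K}. B)"
      proof (rule sum_mono)
        fix j assume "j \<in> {..<K}"
        then have "u!j \<in> A" using u by auto
        then show "card {x\<in>A. tdist t x (u!j) \<le> D} \<le> B" by (rule ball)
      qed
      finally show "card ((\<lambda>x. x # u) ` (\<Union>j\<in>{..<K}. {x\<in>A. tdist t x (u!j) \<le> D})) \<le> K * B" by simp
    qed
    also have "\<dots> = card A ^ K * (K * B)" by (simp add: card_lists_length_eq[OF fin])
    finally show ?thesis .
  qed
  have "card (?bad (Suc K)) \<le> card (?X \<union> ?Y)"
    by (rule card_mono[OF _ sub], rule finite_UnI, intro finite_imageI finite_cartesian_product fin fb) (simp add: finL fin)
  also have "\<dots> \<le> card ?X + card ?Y" by (rule card_Un_le)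
  finally have c: "card (?bad (Suc K)) \<le> card A * card (?bad K) + card A ^ K * (K * B)" using cX cY by linarith
  have "card (?bad (Suc K)) * card A \<le> (card A * card (?bad K) + card A ^ K * (K * B)) * card A"
    using c by (rule mult_le_mono1)
  also have "\<dots> = card A * (card (?bad K) * card A) + card A ^ Suc K * (K * B)" by (simp add: algebra_simps)
  also have "\<dots> \<le> card A * (K^2 * B * card A ^ K) + card A ^ Suc K * (K * B)"
    using Suc.IH by simp
  also have "\<dots> = (K^2 + K) * B * card A ^ Suc K" by (simp add: algebra_simps)
  also have "\<dots> \<le> (Suc K)^2 * B * card A ^ Suc K" by (intro mult_le_mono1) (simp add: power2_eq_square)
  finally show ?case .
qed




lemma mod_diff_ne:
  fixes a b K :: nat
  assumes "a < b" "b < a + K"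
  shows "a mod K \<noteq> b mod K"
proof
  assume "a mod K = b mod K"
  then have "K dvd (b - a)" using assms mod_eq_dvd_iff_nat[of a b K] by simp
  moreover have "0 < b - a" "b - a < K" using assms by auto
  ultimately show False using nat_dvd_not_less by blast
qed

lemma round_cost:
  fixes t :: "nat tree" and s ell f :: "nat \<Rightarrow> nat"
  assumes K: "K = 2*k" and J0: "1 \<le> J0" "J0 + K \<le> j0"
    and blk: "\<And>j. J0 \<le> j \<Longrightarrow> j < j0 + K \<Longrightarrow> s j = u ! ((j - J0) mod K)"
    and lu: "length u = K" and g: "gd D t u"
    and fr: "\<And>j. j \<in> {j0..<j0+K} \<Longrightarrow> f j \<in> {1..k}"
  shows "k * (D+1) \<le> (\<Sum>j\<in>{j0..<j0+K}. 1 + tdist t (s j) (finger_pos s ell f (f j) j))"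
proof -
  have Kpos: "0 < K \<or> k = 0" using K by auto
  define E where "E = {j\<in>{j0..<j0+K}. (\<exists>t'\<in>{J0..<j}. f t' = f j) \<and>
      (Max {t'\<in>{1..<j}. f t' = f j} - J0) mod K \<noteq> (j - J0) mod K}"
  have costE: "D + 1 \<le> 1 + tdist t (s j) (finger_pos s ell f (f j) j)" if jE: "j \<in> E" for j
  proof -
    from jE obtain t' where t': "t' \<in> {J0..<j}" "f t' = f j" and
      ne: "(Max {t'\<in>{1..<j}. f t' = f j} - J0) mod K \<noteq> (j - J0) mod K" and jr: "j \<in> {j0..<j0+K}"
      unfolding E_def by blast
    define M where "M = Max {t'\<in>{1..<j}. f t' = f j}"
    have t'in: "t' \<in> {t'\<in>{1..<j}. f t' = f j}" using t' J0 by auto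
    have "M \<in> {t'\<in>{1..<j}. f t' = f j}" unfolding M_def by (rule Max_in) (use t'in in auto)
    then have Mlt: "M < j" by auto
    have "t' \<le> M" unfolding M_def by (rule Max_ge) (use t'in in auto)
    then have MJ: "J0 \<le> M" using t' by auto
    have fp: "finger_pos s ell f (f j) j = s M" unfolding finger_pos_def M_def using t'in by auto
    have sM: "s M = u ! ((M - J0) mod K)" using blk MJ Mlt jr by auto
    have sj: "s j = u ! ((j - J0) mod K)" using blk jr J0 by auto
    have Kp: "0 < K" using K jr by auto
    have "D < tdist t (u ! ((j - J0) mod K)) (u ! ((M - J0) mod K))"
      using g ne Kp lu unfolding gd_def M_def by (metis mod_less_divisor)
    then show ?thesis using fp sM sj by simp
  qed
  have inj: "inj_on f ({j0..<j0+K} - E)"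
  proof (rule inj_onI)
    have main: "False" if a: "j1 \<in> {j0..<j0+K} - E" "j2 \<in> {j0..<j0+K} - E" "f j1 = f j2" "j1 < j2" for j1 j2
    proof -
      have ex: "\<exists>t'\<in>{J0..<j2}. f t' = f j2" using a J0 by auto
      have eq: "(Max {t'\<in>{1..<j2}. f t' = f j2} - J0) mod K = (j2 - J0) mod K"
        using a(2) ex unfolding E_def by blast
      define M where "M = Max {t'\<in>{1..<j2}. f t' = f j2}"
      have t'in: "j1 \<in> {t'\<in>{1..<j2}. f t' = f j2}" using a J0 by auto
      have "M \<in> {t'\<in>{1..<j2}. f t' = f j2}" unfolding M_def by (rule Max_in) (use t'in in auto)
      then have Mlt: "M < j2" by auto
      have "j1 \<le> M" unfolding M_def by (rule Max_ge) (use t'in in auto)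
      then have "M - J0 < j2 - J0" "j2 - J0 < (M - J0) + K" using Mlt a J0 by auto
      then have "(M - J0) mod K \<noteq> (j2 - J0) mod K" by (rule mod_diff_ne)
      then show False using eq unfolding M_def by simp
    qed
    fix j1 j2 assume "j1 \<in> {j0..<j0+K} - E" "j2 \<in> {j0..<j0+K} - E" "f j1 = f j2"
    then show "j1 = j2" using main by (metis linorder_neqE_nat)
  qed
  have "card ({j0..<j0+K} - E) \<le> card {1..k}"
    by (rule card_inj_on_le[OF inj]) (use fr in auto)
  then have cE': "card ({j0..<j0+K} - E) \<le> k" by simp
  have Esub: "E \<subseteq> {j0..<j0+K}" unfolding E_def by auto
  have "card {j0..<j0+K} = card E + card ({j0..<j0+K} - E)"
    using Esub by (metis card_Diff_subset finite_atLeastLessThan finite_subset card_mono add_diff_inverse_nat not_less)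
  then have cE: "k \<le> card E" using cE' K by simp
  have "k * (D+1) \<le> card E * (D+1)" using cE by (rule mult_le_mono1)
  also have "\<dots> = (\<Sum>j\<in>E. D + 1)" by simp
  also have "\<dots> \<le> (\<Sum>j\<in>E. 1 + tdist t (s j) (finger_pos s ell f (f j) j))" by (intro sum_mono costE)
  also have "\<dots> \<le> (\<Sum>j\<in>{j0..<j0+K}. 1 + tdist t (s j) (finger_pos s ell f (f j) j))"
    by (rule sum_mono2[OF _ Esub]) simp_all
  finally show ?thesis .
qed




lemma sum_shift0: "(\<Sum>i\<in>{a..<a+K}. g i) = (\<Sum>p<K. g (a + p :: nat))"
proof -
  have "(\<Sum>i\<in>{0+a..<K+a}. g i) = (\<Sum>p\<in>{0..<K}. g (p + a))" by (rule sum.shift_bounds_nat_ivl)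
  then show ?thesis by (simp add: add.commute atLeast0LessThan)
qed

lemma sum_decomp:
  fixes g :: "nat \<Rightarrow> 'a::comm_monoid_add"
  shows "(\<Sum>i<N*R*K. g i) = (\<Sum>b<N. \<Sum>\<rho><R. \<Sum>p<K. g ((b*R+\<rho>)*K + p))"
proof -
  have "(\<Sum>i<N*R*K. g i) = (\<Sum>q<N*R. \<Sum>i\<in>{q*K..<q*K+K}. g i)" by (rule sum.nat_group[symmetric])
  also have "\<dots> = (\<Sum>q<N*R. \<Sum>p<K. g (q*K+p))" by (simp add: sum_shift0)
  also have "\<dots> = (\<Sum>b<N. \<Sum>q\<in>{b*R..<b*R+R}. \<Sum>p<K. g (q*K+p))" by (rule sum.nat_group[symmetric])
  also have "\<dots> = (\<Sum>b<N. \<Sum>\<rho><R. \<Sum>p<K. g ((b*R+\<rho>)*K + p))" by (simp add: sum_shift0)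
  finally show ?thesis .
qed

definition sq :: "nat \<Rightarrow> nat \<Rightarrow> nat \<Rightarrow> nat \<Rightarrow> nat" where
  "sq n K R j = List.n_lists K [1..<n+1] ! ((j - 1) div (R*K)) ! ((j - 1) mod K)"

lemma sq_blk:
  assumes "0 < K" "b*R*K + 1 \<le> j" "j < b*R*K + 1 + R*K"
  shows "sq n K R j = List.n_lists K [1..<n+1] ! b ! ((j - (b*R*K+1)) mod K)"
proof -
  define w where "w = j - (b*R*K+1)"
  have j1: "j - 1 = b*(R*K) + w" "w < R*K" using assms unfolding w_def by auto
  have "0 < R*K" using j1(2) by (metis gr_zeroI less_nat_zero_code)
  then have "(j - 1) div (R*K) = b" using j1 by simp
  moreover have "(j - 1) mod K = w mod K" unfolding j1(1) by (metis mod_mult_self3 mult.assoc)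
  ultimately show ?thesis unfolding sq_def w_def by simp
qed

lemma nl_props:
  assumes "b < n^K"
  shows "List.n_lists K [1..<n+1] ! b \<in> set (List.n_lists K [1..<n+1])"
    "length (List.n_lists K [1..<n+1] ! b) = K"
    "set (List.n_lists K [1..<n+1] ! b) \<subseteq> {1..n}"
proof -
  have "b < length (List.n_lists K [1..<n+1])" using assms by (simp add: length_n_lists del: upt_Suc)
  then show 1: "List.n_lists K [1..<n+1] ! b \<in> set (List.n_lists K [1..<n+1])" by simp
  then show "length (List.n_lists K [1..<n+1] ! b) = K" by (simp add: set_n_lists)
  from 1 show "set (List.n_lists K [1..<n+1] ! b) \<subseteq> {1..n}" by (auto simp add: set_n_lists)
qed

lemma sq_in:
  assumes "0 < K" "0 < R" "1 \<le> j" "j \<le> n^K*R*K"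
  shows "sq n K R j \<in> {1..n}"
proof -
  define b where "b = (j - 1) div (R*K)"
  have "j - 1 < n^K * (R*K)" using assms by (simp add: mult.assoc)
  then have "b < n^K" unfolding b_def by (rule less_mult_imp_div_less)
  moreover have "(j-1) mod K < K" using assms by simp
  moreover have "length (List.n_lists K [1..<n+1] ! b) = K" "set (List.n_lists K [1..<n+1] ! b) \<subseteq> {1..n}"
    using nl_props[OF calculation(1)] by auto
  ultimately show ?thesis unfolding sq_def b_def[symmetric] by (metis nth_mem subsetD)
qed

lemma sum_1m: "(\<Sum>j=1..m. g j) = (\<Sum>i<m. g (i+1::nat))"
proof -
  have "(\<Sum>j\<in>{0+1..<m+1}. g j) = (\<Sum>i\<in>{0..<m}. g (i+1))" by (rule sum.shift_bounds_nat_ivl)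
  then show ?thesis by (simp add: atLeast0LessThan atLeastLessThanSuc_atLeastAtMost)
qed




lemma cost_bound:
  fixes t :: "nat tree" and ell f :: "nat \<Rightarrow> nat"
  assumes K: "K = 2*k" "1 \<le> k" and R: "1 \<le> R"
    and fr: "\<And>j. j \<in> {1..n^K*R*K} \<Longrightarrow> f j \<in> {1..k}"
  shows "card {b\<in>{..<n^K}. gd D t (List.n_lists K [1..<n+1] ! b)} * ((R-1)*(k*(D+1)))
         \<le> finger_cost t (n^K*R*K) (sq n K R) ell f"
proof -
  define L where "L = List.n_lists K [1..<n+1]"
  define N where "N = n^K"
  define c where "c j = 1 + tdist t (sq n K R j) (finger_pos (sq n K R) ell f (f j) j)" for j
  have Kp: "0 < K" using K by auto
  have "finger_cost t (N*R*K) (sq n K R) ell f = (\<Sum>j=1..N*R*K. c j)"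
    unfolding finger_cost_def c_def by simp
  also have "\<dots> = (\<Sum>i<N*R*K. c (i+1))" by (rule sum_1m)
  also have "\<dots> = (\<Sum>b<N. \<Sum>\<rho><R. \<Sum>p<K. c ((b*R+\<rho>)*K + p + 1))" by (rule sum_decomp)
  finally have fc: "finger_cost t (N*R*K) (sq n K R) ell f = (\<Sum>b<N. \<Sum>\<rho><R. \<Sum>p<K. c ((b*R+\<rho>)*K + p + 1))" .
  have blockb: "(if gd D t (L!b) then (R-1)*(k*(D+1)) else 0) \<le> (\<Sum>\<rho><R. \<Sum>p<K. c ((b*R+\<rho>)*K + p + 1))"
    if b: "b < N" for b
  proof (cases "gd D t (L!b)")
    case False then show ?thesis by simp
  next
    case True
    have rnd: "k*(D+1) \<le> (\<Sum>p<K. c ((b*R+\<rho>)*K + p + 1))" if \<rho>: "\<rho> \<in> {1..<R}" for \<rho>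
    proof -
      define j0 where "j0 = (b*R+\<rho>)*K + 1"
      have eq: "(\<Sum>p<K. c ((b*R+\<rho>)*K + p + 1)) = (\<Sum>j\<in>{j0..<j0+K}. c j)"
      proof -
        have "(\<Sum>j\<in>{j0..<j0+K}. c j) = (\<Sum>p<K. c (j0+p))" by (rule sum_shift0)
        then show ?thesis unfolding j0_def by (simp add: ac_simps)
      qed
      have le: "(\<rho>+1)*K \<le> R*K" using \<rho> by (intro mult_le_mono1) auto
      have "k*(D+1) \<le> (\<Sum>j\<in>{j0..<j0+K}. 1 + tdist t (sq n K R j) (finger_pos (sq n K R) ell f (f j) j))"
      proof (rule round_cost[where ?J0.0 = "b*R*K+1" and u = "L!b"])
        show "K = 2*k" by (rule K(1))
        show "1 \<le> b*R*K+1" by simp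
        show "b*R*K+1 + K \<le> j0" unfolding j0_def using \<rho> by (simp add: algebra_simps)
        show "sq n K R j = (L!b) ! ((j - (b*R*K+1)) mod K)" if "b*R*K+1 \<le> j" "j < j0 + K" for j
        proof -
          have "j0 + K \<le> b*R*K + 1 + R*K" unfolding j0_def using le by (simp add: algebra_simps)
          then show ?thesis unfolding L_def using sq_blk[OF Kp, of b R j n] that by simp
        qed
        show "length (L!b) = K" unfolding L_def using nl_props(2)[of b n K] b N_def by simp
        show "gd D t (L!b)" by (rule True)
        show "f j \<in> {1..k}" if "j \<in> {j0..<j0+K}" for j
        proof -
          have "(b+1)*(R*K) \<le> N*(R*K)" using b by (intro mult_le_mono1) simp
          moreover have "j0 + K \<le> (b+1)*(R*K) + 1" unfolding j0_def using le by (simp add: algebra_simps)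
          ultimately have "j \<in> {1..n^K*R*K}" using that unfolding N_def j0_def by (auto simp: algebra_simps)
          then show ?thesis by (rule fr)
        qed
      qed
      then show ?thesis using eq unfolding c_def by simp
    qed
    have "(R-1)*(k*(D+1)) = (\<Sum>\<rho>\<in>{1..<R}. k*(D+1))" by simp
    also have "\<dots> \<le> (\<Sum>\<rho>\<in>{1..<R}. \<Sum>p<K. c ((b*R+\<rho>)*K + p + 1))" by (intro sum_mono rnd)
    also have "\<dots> \<le> (\<Sum>\<rho><R. \<Sum>p<K. c ((b*R+\<rho>)*K + p + 1))"
      by (rule sum_mono2) auto
    finally show ?thesis using True by simp
  qed
  have "card {b\<in>{..<N}. gd D t (L!b)} * ((R-1)*(k*(D+1))) = (\<Sum>b\<in>{b\<in>{..<N}. gd D t (L!b)}. (R-1)*(k*(D+1)))"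
    by simp
  also have "\<dots> = (\<Sum>b<N. if gd D t (L!b) then (R-1)*(k*(D+1)) else 0)"
    by (rule sum.inter_filter) simp
  also have "\<dots> \<le> (\<Sum>b<N. \<Sum>\<rho><R. \<Sum>p<K. c ((b*R+\<rho>)*K + p + 1))" by (intro sum_mono blockb) simp
  finally show ?thesis using fc unfolding L_def N_def by simp
qed




lemma good_count:
  assumes bt: "bst_on n t" and n1: "1 \<le> n" and cond: "2*(K^2*((D+1)*2^(D+1))) \<le> n"
  shows "n^K \<le> 2 * card {b\<in>{..<n^K}. gd D t (List.n_lists K [1..<n+1] ! b)}"
proof -
  define L where "L = List.n_lists K [1..<n+1]"
  define A where "A = {1..n::nat}"
  define B where "B = (D+1)*2^(D+1)"
  have bst: "bst t" using bt by (rule bst_on_bst)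
  have st: "set_tree t = A" using bt unfolding A_def by (rule bst_on_set)
  have ball: "card {x\<in>A. tdist t x y \<le> D} \<le> B" if "y \<in> A" for y
  proof -
    have "{x\<in>A. tdist t x y \<le> D} = {x \<in> set_tree t. tdist t y x \<le> D}" using st tdist_sym by auto
    then show ?thesis using ball_bound[OF bst, of y D] unfolding B_def by simp
  qed
  have bc: "card {u. (set u \<subseteq> A \<and> length u = K) \<and> \<not> gd D t u} * card A \<le> K^2 * B * card A ^ K"
    by (rule bad_count) (simp add: A_def, erule ball)
  have cA: "card A = n" unfolding A_def by simp
  have "2 * card {u. (set u \<subseteq> A \<and> length u = K) \<and> \<not> gd D t u} * n \<le> 2 * (K^2 * B) * n^K"
    using bc cA by simp
  also have "\<dots> \<le> n * n^K" using cond unfolding B_def by (intro mult_le_mono1) (simp add: mult.assoc)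
  finally have bad2: "2 * card {u. (set u \<subseteq> A \<and> length u = K) \<and> \<not> gd D t u} \<le> n^K"
    using n1 by (simp add: mult.commute)
  have dL: "distinct L" unfolding L_def by (intro distinct_n_lists) simp
  have lenL: "length L = n^K" unfolding L_def by (simp add: length_n_lists del: upt_Suc)
  have setL: "set L = {u. set u \<subseteq> A \<and> length u = K}" unfolding L_def A_def set_n_lists
    by (auto simp del: upt_Suc simp: atLeastLessThanSuc_atLeastAtMost)
  have "card {b\<in>{..<n^K}. gd D t (L ! b)} = card ((\<lambda>b. L!b) ` {b\<in>{..<n^K}. gd D t (L ! b)})"
    by (rule card_image[symmetric]) (rule inj_on_nth[OF dL], auto simp: lenL)
  also have "(\<lambda>b. L!b) ` {b\<in>{..<n^K}. gd D t (L ! b)} = {u \<in> set L. gd D t u}"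
    by (auto simp: lenL in_set_conv_nth)
  finally have g1: "card {b\<in>{..<n^K}. gd D t (L ! b)} = card {u \<in> set L. gd D t u}" .
  have fin: "finite (set L)" by simp
  have "{u \<in> set L. \<not> gd D t u} = set L - {u \<in> set L. gd D t u}" by auto
  then have "card {u \<in> set L. \<not> gd D t u} = card (set L) - card {u \<in> set L. gd D t u}"
    using fin by (simp add: card_Diff_subset)
  moreover have "card {u \<in> set L. gd D t u} \<le> card (set L)" using fin by (intro card_mono) auto
  ultimately have "card (set L) = card {u \<in> set L. gd D t u} + card {u \<in> set L. \<not> gd D t u}" by simp
  moreover have "card (set L) = n^K" using dL lenL distinct_card by metis
  moreover have "card {u \<in> set L. \<not> gd D t u} = card {u. (set u \<subseteq> A \<and> length u = K) \<and> \<not> gd D t u}"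
    using setL by (intro arg_cong[where f=card]) auto
  ultimately show ?thesis using g1 bad2 unfolding L_def by linarith
qed

lemma spine_exists: "\<exists>t. bst_on n t"
proof -
  have "inorder (foldr (\<lambda>x t. Node Leaf x t) xs Leaf) = xs" for xs :: "nat list" by (induction xs) auto
  then show ?thesis unfolding bst_on_def by blast
qed




lemma prev_occ_lt: "1 \<le> j \<Longrightarrow> prev_occ s j < j"
proof -
  assume j: "1 \<le> j"
  show ?thesis
  proof (cases "\<exists>i\<in>{1..<j}. s i = s j")
    case True
    have "Max {i\<in>{1..<j}. s i = s j} \<in> {i\<in>{1..<j}. s i = s j}" by (rule Max_in) (use True in auto)
    then show ?thesis unfolding prev_occ_def using True by auto
  next
    case False then show ?thesis unfolding prev_occ_def using j by auto
  qed
qed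

lemma wset_mem: "1 \<le> j \<Longrightarrow> s j \<in> wset s j"
  unfolding wset_def using prev_occ_lt by blast

lemma wset_sub: "wset s j \<subseteq> s ` {1..j}"
  unfolding wset_def by auto

lemma wset_local:
  assumes "1 \<le> K" "K < j" "s (j - K) = s j"
  shows "card (wset s j) \<le> K"
proof -
  have ex: "j - K \<in> {i\<in>{1..<j}. s i = s j}" using assms by auto
  then have "\<exists>i\<in>{1..<j}. s i = s j" by blast
  moreover have "j - K \<le> Max {i\<in>{1..<j}. s i = s j}" by (rule Max_ge) (use ex in auto)
  ultimately have "j - K \<le> prev_occ s j" unfolding prev_occ_def by simp
  then have "wset s j \<subseteq> s ` {j-K<..j}" unfolding wset_def by auto
  then have "card (wset s j) \<le> card (s ` {j-K<..j})" by (intro card_mono) auto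
  also have "\<dots> \<le> card {j-K<..j}" by (rule card_image_le) simp
  also have "\<dots> = K" using assms by simp
  finally show ?thesis .
qed

lemma log_card_le:
  assumes "1 \<le> c" "c \<le> X"
  shows "log 2 (real c) \<le> log 2 (real X)"
  using assms by (subst log_le_cancel_iff) auto

lemma WS_bound:
  assumes K: "1 \<le> K" and R: "1 \<le> R" and n: "1 \<le> n"
  shows "WS (n^K*R*K) (sq n K R) \<le> real (n^K*R*K) * log 2 (real K) + real (n^K*K) * log 2 (real n)"
proof -
  define N where "N = n^K"
  define g where "g j = log 2 (real (card (wset (sq n K R) j)))" for j
  have lK: "0 \<le> log 2 (real K)" using K by simp
  have gb: "g ((b*R+\<rho>)*K + p + 1) \<le> log 2 (real K) + (if \<rho> = 0 then log 2 (real n) else 0)"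
    if b: "b < N" and \<rho>: "\<rho> < R" and p: "p < K" for b \<rho> p
  proof -
    define j where "j = (b*R+\<rho>)*K + p + 1"
    have j1: "1 \<le> j" unfolding j_def by simp
    have c1: "1 \<le> card (wset (sq n K R) j)"
    proof -
      have "finite (wset (sq n K R) j)" by (rule finite_subset[OF wset_sub]) simp
      then show ?thesis using wset_mem[OF j1, of "sq n K R"] by (metis One_nat_def Suc_leI card_gt_0_iff empty_iff)
    qed
    have jm: "j \<le> N*R*K"
    proof -
      have "(b*R+\<rho>)*K + p + 1 \<le> (b*R+\<rho>)*K + K" using p by simp
      also have "\<dots> = (b*R+\<rho>+1)*K" by (simp add: algebra_simps)
      also have "\<dots> \<le> (N*R)*K"
      proof (intro mult_le_mono1)
        have "b*R+\<rho>+1 \<le> b*R + R" using \<rho> by simp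
        also have "\<dots> = (b+1)*R" by simp
        also have "\<dots> \<le> N*R" using b by (intro mult_le_mono1) simp
        finally show "b*R+\<rho>+1 \<le> N*R" .
      qed
      finally show ?thesis unfolding j_def by simp
    qed
    have cn: "card (wset (sq n K R) j) \<le> n"
    proof -
      have "wset (sq n K R) j \<subseteq> {1..n}"
      proof
        fix x assume "x \<in> wset (sq n K R) j"
        then obtain i where "i \<in> {1..j}" "x = sq n K R i" using wset_sub by blast
        then show "x \<in> {1..n}" using sq_in[of K R i n] K R jm unfolding N_def by auto
      qed
      then show ?thesis by (metis card_atLeastAtMost card_mono finite_atLeastAtMost diff_Suc_1)
    qed
    show ?thesis
    proof (cases "\<rho> = 0")
      case True
      have "g j \<le> log 2 (real n)" unfolding g_def by (rule log_card_le[OF c1 cn])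
      then show ?thesis using True lK unfolding j_def by simp
    next
      case False
      have blk: "sq n K R i = List.n_lists K [1..<n+1] ! b ! ((i - (b*R*K+1)) mod K)"
        if "b*R*K + 1 \<le> i" "i < b*R*K + 1 + R*K" for i
        using sq_blk[of K b R i n] K that by simp
      have e1: "j - (b*R*K+1) = \<rho>*K + p" unfolding j_def by (simp add: algebra_simps)
      have e2: "(j - K) - (b*R*K+1) = (\<rho>-1)*K + p" using False unfolding j_def
        by (cases \<rho>) (simp_all add: algebra_simps)
      have lt: "\<rho>*K + p < R*K"
      proof -
        have "\<rho>*K + p < (\<rho>+1)*K" using p by simp
        also have "\<dots> \<le> R*K" using \<rho> by (intro mult_le_mono1) simp
        finally show ?thesis .
      qed
      have "sq n K R (j - K) = sq n K R j"
      proof -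
        have h1: "b*R*K+1 \<le> j" "j < b*R*K+1+R*K" using lt unfolding j_def by (simp_all add: algebra_simps)
        obtain r' where rr: "\<rho> = Suc r'" using False by (cases \<rho>) auto
        have h2: "b*R*K+1 \<le> j - K" "j - K < b*R*K+1+R*K" using lt unfolding j_def rr by (simp_all add: algebra_simps)
        have A: "sq n K R j = List.n_lists K [1..<n+1] ! b ! p"
          using blk[OF h1] e1 p by (simp del: upt_Suc)
        have B: "sq n K R (j - K) = List.n_lists K [1..<n+1] ! b ! p"
          using blk[OF h2] e2 p by (simp del: upt_Suc)
        show ?thesis using A B by simp
      qed
      moreover have "K < j"
      proof -
        have "1*K \<le> (b*R+\<rho>)*K" using False by (intro mult_le_mono1) simp
        then show ?thesis unfolding j_def by linarith
      qed
      ultimately have "card (wset (sq n K R) j) \<le> K" using K by (intro wset_local) auto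
      then have "g j \<le> log 2 (real K)" unfolding g_def by (rule log_card_le[OF c1])
      then show ?thesis using False unfolding j_def by simp
    qed
  qed
  have "WS (N*R*K) (sq n K R) = (\<Sum>j=1..N*R*K. g j)" unfolding WS_def g_def by simp
  also have "\<dots> = (\<Sum>i<N*R*K. g (i+1))" by (rule sum_1m)
  also have "\<dots> = (\<Sum>b<N. \<Sum>\<rho><R. \<Sum>p<K. g ((b*R+\<rho>)*K + p + 1))" by (rule sum_decomp)
  also have "\<dots> \<le> (\<Sum>b<N. \<Sum>\<rho><R. \<Sum>p<K. log 2 (real K) + (if \<rho> = 0 then log 2 (real n) else 0))"
    by (intro sum_mono gb) auto
  also have "\<dots> = (\<Sum>b<N. \<Sum>\<rho><R. real K * log 2 (real K) + (if \<rho> = 0 then real K * log 2 (real n) else 0))"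
    by (intro sum.cong refl) (simp add: distrib_left)
  also have "\<dots> = (\<Sum>b<N. real R * (real K * log 2 (real K)) + real K * log 2 (real n))"
    using R by (simp add: sum.distrib)
  also have "\<dots> = real (N*R*K) * log 2 (real K) + real (N*K) * log 2 (real n)"
    by (simp add: algebra_simps)
  finally show ?thesis unfolding N_def .
qed




lemma LF_bound:
  assumes K: "K = 2*k" "1 \<le> k" and R: "2 \<le> R" and n: "1 \<le> n"
    and cond: "2*(K^2*((D+1)*2^(D+1))) \<le> n"
  shows "n^K*R*K*(D+1) \<le> 8 * LF n k (n^K*R*K) (sq n K R)"
proof -
  define m where "m = n^K*R*K"
  define s where "s = sq n K R"
  have "{LF_T n k t m s | t. bst_on n t} \<noteq> {}" using spine_exists by blast
  then have "LF n k m s \<in> {LF_T n k t m s | t. bst_on n t}" unfolding LF_def by (rule Inf_nat_def1)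
  then obtain t where bt: "bst_on n t" and e1: "LF n k m s = LF_T n k t m s" by blast
  have ne: "{finger_cost t m s ell f | ell f. (\<forall>i\<in>{1..k}. ell i \<in> {1..n}) \<and> (\<forall>j\<in>{1..m}. f j \<in> {1..k})} \<noteq> {}"
  proof -
    have "finger_cost t m s (\<lambda>_. 1) (\<lambda>_. 1) \<in> {finger_cost t m s ell f | ell f. (\<forall>i\<in>{1..k}. ell i \<in> {1..n}) \<and> (\<forall>j\<in>{1..m}. f j \<in> {1..k})}"
      using K n by auto
    then show ?thesis by blast
  qed
  have "LF_T n k t m s \<in> {finger_cost t m s ell f | ell f. (\<forall>i\<in>{1..k}. ell i \<in> {1..n}) \<and> (\<forall>j\<in>{1..m}. f j \<in> {1..k})}"
    unfolding LF_T_def by (rule Inf_nat_def1[OF ne])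
  then obtain ell f where fr: "\<forall>j\<in>{1..m}. f j \<in> {1..k}" and e2: "LF_T n k t m s = finger_cost t m s ell f" by blast
  have cb: "card {b\<in>{..<n^K}. gd D t (List.n_lists K [1..<n+1] ! b)} * ((R-1)*(k*(D+1))) \<le> LF n k m s"
    using cost_bound[OF K, of R n f D t ell] R fr e1 e2 unfolding m_def s_def by simp
  have gc: "n^K \<le> 2 * card {b\<in>{..<n^K}. gd D t (List.n_lists K [1..<n+1] ! b)}"
    by (rule good_count[OF bt n cond])
  have "n^K*R*K*(D+1) = n^K * (R * (2*(k*(D+1))))" using K by (simp add: algebra_simps)
  also have "\<dots> \<le> n^K * (4*((R-1)*(k*(D+1))))"
  proof (intro mult_le_mono2)
    have "R*2 \<le> 4*(R-1)" using R by simp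
    then have "R*2*(k*(D+1)) \<le> 4*(R-1)*(k*(D+1))" by (rule mult_le_mono1)
    then show "R * (2*(k*(D+1))) \<le> 4*((R-1)*(k*(D+1)))" by (simp add: algebra_simps)
  qed
  also have "\<dots> \<le> 2 * card {b\<in>{..<n^K}. gd D t (List.n_lists K [1..<n+1] ! b)} * (4*((R-1)*(k*(D+1))))"
    using gc by (rule mult_le_mono1)
  also have "\<dots> \<le> 8 * LF n k m s" using cb by simp
  finally show ?thesis unfolding m_def s_def .
qed




lemma ev_aux:
  fixes C d :: real assumes "d > 0"
  shows "eventually (\<lambda>x::real. 16*C^2*(log 2 x + 1) \<le> x powr d) at_top"
  using assms by real_asymp

lemma ev_nat:
  fixes C d :: real assumes "d > 0"
  shows "\<exists>n0::nat. \<forall>n\<ge>n0. 16*C^2*(log 2 (real n) + 1) \<le> real n powr d"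
proof -
  have "eventually (\<lambda>n::nat. 16*C^2*(log 2 (real n) + 1) \<le> real n powr d) sequentially"
    by (rule eventually_compose_filterlim[OF ev_aux[OF assms] filterlim_real_sequentially])
  then show ?thesis by (simp add: eventually_sequentially)
qed




theorem mainTheorem14:
  fixes \<epsilon> C :: real
  assumes "\<epsilon> > 0" and "C > 0"
  shows "\<exists>c1 c2 :: real. c1 > 0 \<and> c2 > 0 \<and> (\<exists>n0::nat. \<forall>n\<ge>n0. \<forall>k::nat.
           2 \<le> k \<and> real k \<le> C * real n powr (1/2 - \<epsilon>) \<longrightarrow>
           (\<exists>(m::nat) (s::nat \<Rightarrow> nat). m \<ge> 1 \<and> seq_in n m s \<and>
              WS m s \<le> c1 * real m * log 2 (real k) \<and>
              real (LF n k m s) \<ge> c2 * real m * log 2 (real n / real k)))"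
proof -
  define d where "d = min \<epsilon> (1/4)"
  have d0: "0 < d" "d \<le> \<epsilon>" "d \<le> 1/4" using assms unfolding d_def by auto
  obtain n1 :: nat where n1: "\<forall>n\<ge>n1. 16*C^2*(log 2 (real n) + 1) \<le> real n powr d"
    using ev_nat[OF d0(1)] by blast
  define n0 where "n0 = max n1 2"
  have main: "\<exists>(m::nat) (s::nat \<Rightarrow> nat). m \<ge> 1 \<and> seq_in n m s \<and>
              WS m s \<le> 3 * real m * log 2 (real k) \<and>
              real (LF n k m s) \<ge> (d/8) * real m * log 2 (real n / real k)"
    if n: "n \<ge> n0" and k: "2 \<le> k" "real k \<le> C * real n powr (1/2 - \<epsilon>)" for n k
  proof -
    define K where "K = 2*k"
    define R where "R = n"
    define D where "D = nat \<lfloor>d * log 2 (real n)\<rfloor>"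
    define m where "m = n^K*R*K"
    define s where "s = sq n K R"
    have n2: "2 \<le> n" using n unfolding n0_def by simp
    have nr: "1 \<le> real n" using n2 by simp
    have hn: "16*C^2*(log 2 (real n) + 1) \<le> real n powr d" using n1 n unfolding n0_def by simp
    have lg0: "0 \<le> log 2 (real n)" using nr by simp
    have Dle: "real D \<le> d * log 2 (real n)" unfolding D_def using d0 lg0 by simp
    have Dge: "d * log 2 (real n) \<le> real D + 1" unfolding D_def using d0 lg0 by linarith
    have m1: "1 \<le> m" unfolding m_def K_def R_def using n2 k by simp
    have kle: "real k \<le> C * real n powr (1/2 - d)"
    proof -
      have "real n powr (1/2 - \<epsilon>) \<le> real n powr (1/2 - d)" using nr d0 by (intro powr_mono) auto
      then show ?thesis using k(2) assms(2) by (meson mult_left_mono less_imp_le order_trans)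
    qed
    have k2: "real k ^ 2 \<le> C^2 * real n powr (1 - 2*d)"
    proof -
      have "real k ^ 2 \<le> (C * real n powr (1/2 - d))^2" using kle by (intro power_mono) auto
      also have "\<dots> = C^2 * (real n powr (1/2 - d))^2" by (simp add: power_mult_distrib)
      also have "(real n powr (1/2 - d))^2 = real n powr (1 - 2*d)"
        using nr by (simp add: powr_powr[symmetric] power2_eq_square powr_add[symmetric])
      finally show ?thesis .
    qed
    have p2: "(2::real)^D \<le> real n powr d"
    proof -
      have "(2::real)^D = 2 powr (real D)" by (simp add: powr_realpow)
      also have "\<dots> \<le> 2 powr (d * log 2 (real n))" using Dle by (intro powr_mono) auto
      also have "\<dots> = (2 powr (log 2 (real n))) powr d" by (simp add: powr_powr mult.commute)
      also have "\<dots> = real n powr d" using nr by simp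
      finally show ?thesis .
    qed
    have D1: "real D + 1 \<le> log 2 (real n) + 1"
    proof -
      have "d * log 2 (real n) \<le> log 2 (real n)" using d0 lg0 mult_right_mono[of d 1 "log 2 (real n)"] by simp
      then show ?thesis using Dle by linarith
    qed
    have condr: "16 * real k^2 * (real D + 1) * 2^D \<le> real n"
    proof -
      have "16 * real k^2 * (real D + 1) * 2^D \<le> 16 * (C^2 * real n powr (1 - 2*d)) * (log 2 (real n) + 1) * real n powr d"
        using k2 D1 p2 by (intro mult_mono) auto
      also have "\<dots> = (16*C^2*(log 2 (real n) + 1)) * real n powr (1 - d)"
      proof -
        have pw: "real n powr (1 - 2*d) * real n powr d = real n powr (1 - d)"
          using nr by (simp add: powr_add[symmetric])
        show ?thesis by (simp only: pw[symmetric] mult_ac)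
      qed
      also have "\<dots> \<le> real n powr d * real n powr (1 - d)" using hn by (intro mult_right_mono) auto
      also have "\<dots> = real n" using nr by (simp add: powr_add[symmetric])
      finally show ?thesis .
    qed
    have cond: "2*(K^2*((D+1)*2^(D+1))) \<le> n"
    proof -
      have "real (2*(K^2*((D+1)*2^(D+1)))) = 16 * real k^2 * (real D + 1) * 2^D"
        unfolding K_def by (simp add: algebra_simps power2_eq_square)
      then show ?thesis using condr by linarith
    qed
    have lf: "real m * (real D + 1) \<le> 8 * real (LF n k m s)"
    proof -
      have "m*(D+1) \<le> 8 * LF n k m s" unfolding m_def s_def
        using LF_bound[of K k R n D] K_def k R_def n2 cond by simp
      then have "real (m*(D+1)) \<le> real (8 * LF n k m s)" by linarith
      then show ?thesis by (simp add: distrib_left)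
    qed
    have lgk: "log 2 (real n / real k) \<le> log 2 (real n)"
      using k nr by (subst log_le_cancel_iff) (auto simp: divide_le_eq)
    have LFb: "(d/8) * real m * log 2 (real n / real k) \<le> real (LF n k m s)"
    proof -
      have "(d/8) * real m * log 2 (real n / real k) = real m * (d * log 2 (real n / real k)) / 8" by simp
      also have "\<dots> \<le> real m * (real D + 1) / 8"
      proof -
        have "d * log 2 (real n / real k) \<le> d * log 2 (real n)" using lgk d0 by (intro mult_left_mono) auto
        then have "d * log 2 (real n / real k) \<le> real D + 1" using Dge by linarith
        then show ?thesis by (intro divide_right_mono mult_left_mono) auto
      qed
      also have "\<dots> \<le> real (LF n k m s)" using lf by simp
      finally show ?thesis .
    qed
    have ws: "WS m s \<le> real m * log 2 (real K) + real (n^K*K) * log 2 (real n)"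
      unfolding m_def s_def using WS_bound[of K R n] K_def k R_def n2 by simp
    have lgn: "log 2 (real n) \<le> real n"
    proof -
      have "real n < 2^n" by (rule of_nat_less_two_power)
      then have "log 2 (real n) < log 2 (2^n)" using nr by (subst log_less_cancel_iff) auto
      also have "log 2 ((2::real)^n) = real n" by (simp add: log_pow_cancel)
      finally show ?thesis by simp
    qed
    have w2: "real (n^K*K) * log 2 (real n) \<le> real m"
    proof -
      have "real (n^K*K) * log 2 (real n) \<le> real (n^K*K) * real n" using lgn by (intro mult_left_mono) auto
      also have "\<dots> = real m" unfolding m_def R_def by simp
      finally show ?thesis .
    qed
    have lk1: "1 \<le> log 2 (real k)" using k by simp
    have lK: "log 2 (real K) = 1 + log 2 (real k)" unfolding K_def using k by (simp add: log_mult)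
    have WSb: "WS m s \<le> 3 * real m * log 2 (real k)"
    proof -
      have "WS m s \<le> real m * (1 + log 2 (real k)) + real m" using ws w2 lK by simp
      also have "\<dots> = real m * (2 + log 2 (real k))" by (simp add: algebra_simps)
      also have "\<dots> \<le> real m * (3 * log 2 (real k))" using lk1 by (intro mult_left_mono) auto
      finally show ?thesis by simp
    qed
    have si: "seq_in n m s" unfolding seq_in_def m_def s_def
      using sq_in[of K R _ n] K_def k R_def n2 by auto
    show ?thesis using m1 si WSb LFb by blast
  qed
  show ?thesis
  proof (rule exI[of _ 3], rule exI[of _ "d/8"], intro conjI)
    show "(3::real) > 0" by simp
    show "d/8 > 0" using d0 by simp
    show "\<exists>n0::nat. \<forall>n\<ge>n0. \<forall>k::nat.
           2 \<le> k \<and> real k \<le> C * real n powr (1/2 - \<epsilon>) \<longrightarrow>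
           (\<exists>(m::nat) (s::nat \<Rightarrow> nat). m \<ge> 1 \<and> seq_in n m s \<and>
              WS m s \<le> 3 * real m * log 2 (real k) \<and>
              real (LF n k m s) \<ge> d/8 * real m * log 2 (real n / real k))"
      by (rule exI[of _ n0]) (use main in blast)
  qed
qed


end
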